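(* Let $r\ge 2$ and let $S$ be a mutual-visibility set of the glued binary tree $GT(r)$. If $|S\cap V_r^{(1)}|\ge 2$, then to each vertex $v\in S\cap V_r^{(1)}$ one can assign a pair of twin quasi-leaves belonging to $T_v$ and not belonging to $S$, in such a way that the pairs assigned to distinct vertices of $S\cap V_r^{(1)}$ are pairwise disjoint.
   Context: A perfect binary tree of depth $r\ge1$ is a rooted tree in which every non-leaf vertex has exactly $2$ children and all leaves have depth $r$. The glued binary tree $GT(r)$ is obtained from two copies $T_r^{(1)}$ and $T_r^{(2)}$ of the perfect binary tree of depth $r$ by pairwise identifying their leaves (via a fixed isomorphism of the copies). The identified vertices are the quasi-leaves; $L(GT(r))=V(T_r^{(1)})\cap V(T_r^{(2)})$ is the set of quasi-leaves, and $V_r^{(i)}=V(T_r^{(i)})\setminus L(GT(r))$ for $i\in\{1,2\}$. Two quasi-leaves $u,v$ with $N(u)=N(v)$ are twin quasi-leaves. For a vertex $u\in V_r^{(1)}$ (resp. $V_r^{(2)}$), $T_u$ denotes the subtree of $T_r^{(1)}$ (resp. $T_r^{(2)}$) rooted at $u$ consisting of $u$ and all its descendants, its leaves being the quasi-leaves that are descendants of $u$. For $S\subseteq V(G)$, two vertices $u,v$ are $S$-visible if there exists a shortest $u,v$-path $P$ with $V(P)\cap S\subseteq\{u,v\}$; $S$ is a mutual-visibility set if every two vertices of $S$ are $S$-visible. *)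

theory Defs
  imports Main
begin

text \<open>Vertices of GT(r) are pairs (i, w) with w a binary string (the path from the root).
  i = 1 or i = 2: non-leaf vertex of the copy T_r^(i), length w < r;
  i = 0: quasi-leaf (identified leaf of both copies), length w = r.
  The fixed isomorphism between the copies is the identity on strings.\<close>

type_synonym gvert = "nat \<times> bool list"

definition gt_V :: "nat \<Rightarrow> gvert set" where
  "gt_V r = {(i, w). ((i = 1 \<or> i = 2) \<and> length w < r) \<or> (i = 0 \<and> length w = r)}"

definition gt_L :: "nat \<Rightarrow> gvert set" where
  "gt_L r = {(i, w). i = 0 \<and> length w = r}"

definition gt_Vcopy :: "nat \<Rightarrow> nat \<Rightarrow> gvert set" where
  "gt_Vcopy r i = {(j, w). j = i \<and> length w < r}"

definition gt_child :: "nat \<Rightarrow> gvert \<Rightarrow> gvert \<Rightarrow> bool" where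
  "gt_child r x y \<longleftrightarrow> x \<in> gt_V r \<and> y \<in> gt_V r \<and> fst x \<noteq> 0 \<and>
     (\<exists>b. snd y = snd x @ [b]) \<and> (fst y = fst x \<or> fst y = 0)"

definition gt_adj :: "nat \<Rightarrow> gvert \<Rightarrow> gvert \<Rightarrow> bool" where
  "gt_adj r x y \<longleftrightarrow> gt_child r x y \<or> gt_child r y x"

definition gt_nbhd :: "nat \<Rightarrow> gvert \<Rightarrow> gvert set" where
  "gt_nbhd r x = {y. gt_adj r x y}"

definition gt_walk :: "nat \<Rightarrow> gvert list \<Rightarrow> bool" where
  "gt_walk r p \<longleftrightarrow> p \<noteq> [] \<and> set p \<subseteq> gt_V r \<and>
     (\<forall>k. Suc k < length p \<longrightarrow> gt_adj r (p ! k) (p ! Suc k))"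

definition gt_dist :: "nat \<Rightarrow> gvert \<Rightarrow> gvert \<Rightarrow> nat" where
  "gt_dist r u v = (LEAST n. \<exists>p. gt_walk r p \<and> hd p = u \<and> last p = v \<and> length p = Suc n)"

definition gt_shortest_path :: "nat \<Rightarrow> gvert \<Rightarrow> gvert \<Rightarrow> gvert list \<Rightarrow> bool" where
  "gt_shortest_path r u v p \<longleftrightarrow> gt_walk r p \<and> hd p = u \<and> last p = v \<and>
     length p = Suc (gt_dist r u v)"

definition gt_S_visible :: "nat \<Rightarrow> gvert set \<Rightarrow> gvert \<Rightarrow> gvert \<Rightarrow> bool" where
  "gt_S_visible r S u v \<longleftrightarrow>
     (\<exists>p. gt_shortest_path r u v p \<and> set p \<inter> S \<subseteq> {u, v})"

definition gt_mutual_visibility :: "nat \<Rightarrow> gvert set \<Rightarrow> bool" where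
  "gt_mutual_visibility r S \<longleftrightarrow> S \<subseteq> gt_V r \<and>
     (\<forall>u\<in>S. \<forall>v\<in>S. gt_S_visible r S u v)"

definition gt_twin :: "nat \<Rightarrow> gvert \<Rightarrow> gvert \<Rightarrow> bool" where
  "gt_twin r x y \<longleftrightarrow> x \<in> gt_L r \<and> y \<in> gt_L r \<and> x \<noteq> y \<and> gt_nbhd r x = gt_nbhd r y"

definition gt_subtree_leaves :: "nat \<Rightarrow> gvert \<Rightarrow> gvert set" where
  "gt_subtree_leaves r v = {(j, u). j = 0 \<and> length u = r \<and> (\<exists>s. u = snd v @ s)}"

end

theory Submission
  imports Defs "HOL-Library.Sublist"
begin

abbreviation lcp :: "bool list \<Rightarrow> bool list \<Rightarrow> bool list" where
  "lcp \<equiv> longest_common_prefix"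

lemma prefix_antisym': "prefix x y \<Longrightarrow> prefix y x \<Longrightarrow> x = y"
  using prefix_order.antisym by blast

lemma lcp_of_prefix: "prefix x y \<Longrightarrow> lcp x y = x"
  by (meson longest_common_prefix_max_prefix longest_common_prefix_prefix1 prefix_antisym' prefix_order.refl)

lemma lcp_snoc: "lcp (x@[e]) y = lcp x y \<or> (lcp (x@[e]) y = x@[e] \<and> lcp x y = x)"
proof (cases "prefix (x@[e]) y")
  case True
  have "prefix x y" using True by (rule append_prefixD)
  then have "lcp x y = x" by (rule lcp_of_prefix)
  moreover have "lcp (x@[e]) y = x@[e]" using True by (rule lcp_of_prefix)
  ultimately show ?thesis by blast
next
  case False
  define L where "L = lcp (x@[e]) y"
  have a1: "prefix L (x@[e])" unfolding L_def by (rule longest_common_prefix_prefix1)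
  have a2: "prefix L y" unfolding L_def by (rule longest_common_prefix_prefix2)
  have "L \<noteq> x@[e]" using a2 False by blast
  then have "prefix L x" using a1 by simp
  then have 1: "prefix L (lcp x y)"
    using a2 longest_common_prefix_max_prefix by blast
  have "prefix (lcp x y) x" by (rule longest_common_prefix_prefix1)
  then have "prefix (lcp x y) (x@[e])" by (simp add: prefix_snoc)
  then have "prefix (lcp x y) L"
    unfolding L_def using longest_common_prefix_max_prefix longest_common_prefix_prefix2 by blast
  then have "L = lcp x y" using 1 prefix_antisym' by blast
  then show ?thesis unfolding L_def by blast
qed

lemma lcp_append_long: "length y \<le> length x \<Longrightarrow> lcp (x@t) y = lcp x y"
proof -
  assume len: "length y \<le> length x"
  define L where "L = lcp (x@t) y"
  have a1: "prefix L (x@t)" unfolding L_def by (rule longest_common_prefix_prefix1)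
  have a2: "prefix L y" unfolding L_def by (rule longest_common_prefix_prefix2)
  have "length L \<le> length y" using a2 by (rule prefix_length_le)
  then have ll: "length L \<le> length x" using len by linarith
  have "prefix L x"
  proof -
    from a1 obtain z where z: "x @ t = L @ z" unfolding prefix_def by blast
    have "take (length L) (x @ t) = L" using z by simp
    moreover have "take (length L) (x @ t) = take (length L) x" using ll by simp
    ultimately have "L = take (length L) x" by simp
    then show ?thesis by (metis prefix_def append_take_drop_id)
  qed
  then have 1: "prefix L (lcp x y)"
    using a2 longest_common_prefix_max_prefix by blast
  have "prefix (lcp x y) x" by (rule longest_common_prefix_prefix1)
  then have "prefix (lcp x y) (x@t)" using prefix_order.trans by (metis prefix_def append_assoc)
  then have "prefix (lcp x y) L"
    unfolding L_def using longest_common_prefix_max_prefix longest_common_prefix_prefix2 by blast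
  then have "L = lcp x y" using 1 prefix_antisym' by blast
  then show ?thesis unfolding L_def by blast
qed

definition td :: "bool list \<Rightarrow> bool list \<Rightarrow> int" where
  "td s t = int (length s) + int (length t) - 2 * int (length (lcp s t))"

lemma td_snoc: "\<bar>td (s@[e]) t - td s t\<bar> \<le> 1"
proof -
  have "lcp (s@[e]) t = lcp s t \<or> (lcp (s@[e]) t = s@[e] \<and> lcp s t = s)" by (rule lcp_snoc)
  then show ?thesis
  proof (elim disjE conjE)
    assume "lcp (s@[e]) t = lcp s t"
    then show ?thesis unfolding td_def by simp
  next
    assume "lcp (s@[e]) t = s@[e]" "lcp s t = s"
    then show ?thesis unfolding td_def by simp
  qed
qed

lemma td_snoc_long: "length t \<le> length s \<Longrightarrow> td (s@[e]) t = td s t + 1"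
  using lcp_append_long[of t s "[e]"] by (simp add: td_def)

lemma td_self: "td s s = 0"
  by (simp add: td_def lcp_of_prefix)

lemma td_nonneg: "td s t \<ge> 0"
proof -
  have "length (lcp s t) \<le> length s" "length (lcp s t) \<le> length t"
    using longest_common_prefix_prefix1 longest_common_prefix_prefix2 prefix_length_le by blast+
  then show ?thesis by (simp add: td_def)
qed

lemma prefix_len_eq: "prefix x y \<Longrightarrow> length y \<le> length x \<Longrightarrow> x = y"
  by (auto simp: prefix_def)

lemma td_zero: "td s t = 0 \<Longrightarrow> s = t"
proof -
  assume z: "td s t = 0"
  have p: "prefix (lcp s t) s" "prefix (lcp s t) t"
    using longest_common_prefix_prefix1 longest_common_prefix_prefix2 by blast+
  have "length (lcp s t) \<le> length s" "length (lcp s t) \<le> length t"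
    using p prefix_length_le by blast+
  then have e: "length (lcp s t) = length s" "length (lcp s t) = length t" using z by (auto simp: td_def)
  have "lcp s t = s" using prefix_len_eq[OF p(1)] e(1) by simp
  moreover have "lcp s t = t" using prefix_len_eq[OF p(2)] e(2) by simp
  ultimately show ?thesis by simp
qed

definition vert :: "nat \<Rightarrow> bool list \<Rightarrow> gvert" where
  "vert r s = (if length s = r then 0 else 1, s)"

lemma vert_V: "length s \<le> r \<Longrightarrow> vert r s \<in> gt_V r"
  by (auto simp: vert_def gt_V_def)

lemma adj_vert: "length s < r \<Longrightarrow> gt_adj r (vert r s) (vert r (s@[e]))"
  unfolding gt_adj_def gt_child_def using vert_V[of s r] vert_V[of "s@[e]" r]
  by (auto simp: vert_def)

lemma adj_sym: "gt_adj r x y \<Longrightarrow> gt_adj r y x"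
  by (auto simp: gt_adj_def)

lemma walk_cons: "gt_walk r p \<Longrightarrow> x \<in> gt_V r \<Longrightarrow> gt_adj r x (hd p) \<Longrightarrow> gt_walk r (x#p)"
  unfolding gt_walk_def
  apply (auto)
  subgoal for k by (cases k) (auto simp: hd_conv_nth)
  done

lemma walk_exists:
  "td s t = int n \<Longrightarrow> length s \<le> r \<Longrightarrow> length t \<le> r \<Longrightarrow>
   \<exists>p. gt_walk r p \<and> hd p = vert r s \<and> last p = vert r t \<and> length p = Suc n"
proof (induction n arbitrary: s)
  case 0
  then have "s = t" using td_zero by simp
  then show ?case using 0 vert_V[of s r]
    by (intro exI[of _ "[vert r s]"]) (auto simp: gt_walk_def)
next
  case (Suc n)
  show ?case
  proof (cases "prefix s t")
    case False
    then have "s \<noteq> []" by auto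
    then obtain s' e where se: "s = s' @ [e]" by (metis rev_exhaust)
    have "lcp s t \<noteq> s" using False longest_common_prefix_prefix2 by metis
    then have "td s t = td s' t + 1" using lcp_snoc[of s' e t] se by (auto simp: td_def)
    then have "td s' t = int n" using Suc by simp
    moreover have "length s' \<le> r" using Suc se by simp
    ultimately obtain p where p: "gt_walk r p" "hd p = vert r s'" "last p = vert r t" "length p = Suc n"
      using Suc by blast
    have "gt_adj r (vert r s) (hd p)" using p adj_vert[of s' r e] adj_sym se Suc by auto
    then have "gt_walk r (vert r s # p)" using walk_cons p vert_V Suc by blast
    then show ?thesis using p by (intro exI[of _ "vert r s # p"]) (auto simp: gt_walk_def)
  next
    case True
    have "s \<noteq> t" using Suc td_self by (metis of_nat_Suc of_nat_eq_0_iff nat.simps(3))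
    then obtain c rest where t: "t = s @ c # rest" using True
      by (metis append.right_neutral neq_Nil_conv prefix_def)
    let ?s2 = "s @ [c]"
    have "prefix ?s2 t" using t by simp
    then have "td ?s2 t = td s t - 1" using True
      by (simp add: td_def lcp_of_prefix)
    then have "td ?s2 t = int n" using Suc by simp
    moreover have "length ?s2 \<le> r" using Suc t by simp
    ultimately obtain p where p: "gt_walk r p" "hd p = vert r ?s2" "last p = vert r t" "length p = Suc n"
      using Suc by blast
    have "length s < r" using Suc t by simp
    then have "gt_adj r (vert r s) (hd p)" using p adj_vert by auto
    then have "gt_walk r (vert r s # p)" using walk_cons p vert_V Suc by blast
    then show ?thesis using p by (intro exI[of _ "vert r s # p"]) (auto simp: gt_walk_def)
  qed
qed

lemma list_lip:
  fixes phi :: "'b \<Rightarrow> int"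
  shows "p \<noteq> [] \<Longrightarrow> (\<forall>k. Suc k < length p \<longrightarrow> \<bar>phi (p!k) - phi (p!Suc k)\<bar> \<le> 1) \<Longrightarrow>
    phi (hd p) - phi (last p) \<le> int (length p) - 1"
proof (induction p)
  case Nil
  then show ?case by simp
next
  case (Cons x p)
  show ?case
  proof (cases "p = []")
    case True
    then show ?thesis by simp
  next
    case False
    have "\<forall>k. Suc k < length p \<longrightarrow> \<bar>phi (p!k) - phi (p!Suc k)\<bar> \<le> 1"
      using Cons.prems(2) by (metis Suc_less_eq length_Cons nth_Cons_Suc)
    then have ih: "phi (hd p) - phi (last p) \<le> int (length p) - 1" using Cons False by blast
    have "\<bar>phi x - phi (hd p)\<bar> \<le> 1" using Cons.prems(2)[rule_format, of 0] False
      by (simp add: hd_conv_nth)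
    then show ?thesis using ih False by simp
  qed
qed

definition phi :: "bool list \<Rightarrow> bool \<Rightarrow> bool list \<Rightarrow> gvert \<Rightarrow> int" where
  "phi w d y z = td (snd z) y + (if fst z = 2 \<or> prefix (w@[d]) (snd z) then 1 else 0)"

lemma lip_child:
  assumes "gt_child r x x'" "x \<noteq> (1,w)" "x' \<noteq> (1,w)" "length y < r"
  shows "\<bar>phi w d y x - phi w d y x'\<bar> \<le> 1"
proof -
  obtain i s where x: "x = (i,s)" by fastforce
  obtain e where x': "snd x' = s @ [e]" using assms(1) x by (auto simp: gt_child_def)
  obtain j where j: "x' = (j, s@[e])" using x' by (metis prod.collapse)
  have ij: "i \<noteq> 0" "j = i \<or> j = 0" "x \<in> gt_V r" "x' \<in> gt_V r"
    using assms(1) x j by (auto simp: gt_child_def)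
  have ts: "\<bar>td (s@[e]) y - td s y\<bar> \<le> 1" by (rule td_snoc)
  show ?thesis
  proof (cases "i = 2")
    case True
    show ?thesis
    proof (cases "j = 0")
      case True
      then have "length (s@[e]) = r" using ij j by (auto simp: gt_V_def)
      then have "td (s@[e]) y = td s y + 1" using assms(4) td_snoc_long by simp
      then show ?thesis using x j True \<open>i = 2\<close> by (auto simp: phi_def)
    next
      case False
      then show ?thesis using x j ts \<open>i = 2\<close> ij by (auto simp: phi_def)
    qed
  next
    case False
    then have i1: "i = 1" using ij by (auto simp: gt_V_def x)
    then have j2: "j \<noteq> 2" using ij by auto
    have "prefix (w@[d]) s \<longleftrightarrow> prefix (w@[d]) (s@[e])"
    proof
      assume "prefix (w@[d]) s" then show "prefix (w@[d]) (s@[e])" by simp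
    next
      assume "prefix (w@[d]) (s@[e])"
      then have "w@[d] = s@[e] \<or> prefix (w@[d]) s" by simp
      moreover have "s \<noteq> w" using assms(2) x i1 by auto
      ultimately show "prefix (w@[d]) s" by auto
    qed
    then show ?thesis using x j ts i1 j2 by (auto simp: phi_def)
  qed
qed

lemma lip_adj:
  assumes "gt_adj r x x'" "x \<noteq> (1,w)" "x' \<noteq> (1,w)" "length y < r"
  shows "\<bar>phi w d y x - phi w d y x'\<bar> \<le> 1"
  using assms lip_child[of r x x' w y d] lip_child[of r x' x w y d]
  unfolding gt_adj_def by (auto simp: abs_minus_commute)

lemma key:
  assumes mv: "gt_mutual_visibility r S" and aS: "a \<in> S" and aV: "a \<in> gt_V r"
    and a2: "fst a \<noteq> 2" and ap: "prefix (w@[d]) (snd a)"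
    and bS: "(1,y) \<in> S" and yl: "length y < r" and yp: "\<not> prefix (w@[d]) y"
    and vS: "(1,w) \<in> S" and av: "a \<noteq> (1,w)" and yw: "y \<noteq> w"
  shows False
proof -
  have "gt_S_visible r S a (1,y)" using mv aS bS by (auto simp: gt_mutual_visibility_def)
  then obtain p where sp: "gt_shortest_path r a (1,y) p" and avoid: "set p \<inter> S \<subseteq> {a,(1,y)}"
    by (auto simp: gt_S_visible_def)
  have notin: "(1,w) \<notin> set p" using avoid vS av yw by auto
  have aeq: "a = vert r (snd a)" using aV a2 by (cases a) (auto simp: gt_V_def vert_def)
  have alen: "length (snd a) \<le> r" using aV by (cases a) (auto simp: gt_V_def)
  obtain q where q: "gt_walk r q" "hd q = vert r (snd a)" "last q = vert r y"
    "length q = Suc (nat (td (snd a) y))"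
    using walk_exists[of "snd a" y "nat (td (snd a) y)" r] td_nonneg alen yl by auto
  have vy: "vert r y = (1,y)" using yl by (simp add: vert_def)
  have "gt_dist r a (1,y) \<le> nat (td (snd a) y)"
    unfolding gt_dist_def using q aeq vy by (intro Least_le) auto
  then have up: "int (length p) \<le> td (snd a) y + 1" using sp td_nonneg[of "snd a" y]
    by (auto simp: gt_shortest_path_def)
  have w: "gt_walk r p" "hd p = a" "last p = (1,y)" using sp by (auto simp: gt_shortest_path_def)
  have "\<forall>k. Suc k < length p \<longrightarrow> \<bar>phi w d y (p!k) - phi w d y (p!Suc k)\<bar> \<le> 1"
  proof (intro allI impI)
    fix k assume k: "Suc k < length p"
    have "gt_adj r (p!k) (p!Suc k)" using w k by (auto simp: gt_walk_def)
    moreover have "p!k \<noteq> (1,w)" "p!Suc k \<noteq> (1,w)" using notin k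
      by (metis Suc_lessD nth_mem)+
    ultimately show "\<bar>phi w d y (p!k) - phi w d y (p!Suc k)\<bar> \<le> 1" using lip_adj yl by blast
  qed
  then have "phi w d y (hd p) - phi w d y (last p) \<le> int (length p) - 1"
    using list_lip[of p "phi w d y"] w by (auto simp: gt_walk_def)
  moreover have "phi w d y a = td (snd a) y + 1" using a2 ap by (simp add: phi_def)
  moreover have "phi w d y (1,y) = 0" using yp by (simp add: phi_def td_self)
  ultimately show False using up w by simp
qed

lemma snoc_nth_prefix: "prefix w y \<Longrightarrow> length w < length y \<Longrightarrow> prefix (w @ [y ! length w]) y"
proof -
  assume "prefix w y" "length w < length y"
  then obtain z where z: "y = w @ z" "z \<noteq> []" by (auto simp: prefix_def)
  then obtain c z' where "z = c # z'" by (cases z) auto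
  then show ?thesis using z by simp
qed

lemma snoc_prefix_eq: "prefix (w@[a]) y \<Longrightarrow> prefix (w@[b]) y \<Longrightarrow> a = b"
  by (auto simp: prefix_def)

lemma snoc_not_prefix: "\<not> prefix w y \<Longrightarrow> \<not> prefix (w@[a]) y"
  using prefix_order.trans prefix_snoc prefix_order.refl by metis

lemma prefix_neq_len: "prefix w y \<Longrightarrow> w \<noteq> y \<Longrightarrow> length w < length y"
  using prefix_length_less prefix_order.le_less by blast

lemma nbhd_leaf:
  assumes "length s + 1 = r"
  shows "gt_nbhd r (0, s@[e]) = {(1,s),(2,s)}"
proof
  show "gt_nbhd r (0, s@[e]) \<subseteq> {(1,s),(2,s)}"
  proof
    fix y assume "y \<in> gt_nbhd r (0, s@[e])"
    then have "gt_adj r (0, s@[e]) y" by (simp add: gt_nbhd_def)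
    then have "gt_child r (0, s@[e]) y \<or> gt_child r y (0, s@[e])" by (simp only: gt_adj_def)
    moreover have "\<not> gt_child r (0, s@[e]) y" by (simp add: gt_child_def)
    ultimately have c: "gt_child r y (0, s@[e])" by blast
    then obtain b where "s @ [e] = snd y @ [b]" by (auto simp: gt_child_def)
    then have sy: "snd y = s" by simp
    have "fst y \<noteq> 0" "y \<in> gt_V r" using c by (auto simp: gt_child_def)
    then have "fst y = 1 \<or> fst y = 2" by (cases y) (auto simp: gt_V_def)
    then show "y \<in> {(1,s),(2,s)}" using sy by (cases y) auto
  qed
next
  have v: "(0::nat, s@[e]) \<in> gt_V r" using assms by (simp add: gt_V_def)
  have "gt_child r (i, s) (0, s@[e])" if "i = 1 \<or> i = 2" for i
    using that assms v by (auto simp: gt_child_def gt_V_def)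
  then show "{(1,s),(2,s)} \<subseteq> gt_nbhd r (0, s@[e])"
    by (auto simp: gt_nbhd_def gt_adj_def)
qed

theorem mainTheorem2:
  fixes r :: nat and S :: "gvert set"
  assumes "r \<ge> 2"
    and "gt_mutual_visibility r S"
    and "card (S \<inter> gt_Vcopy r 1) \<ge> 2"
  shows "\<exists>f :: gvert \<Rightarrow> gvert \<times> gvert.
     (\<forall>v \<in> S \<inter> gt_Vcopy r 1.
        gt_twin r (fst (f v)) (snd (f v)) \<and>
        fst (f v) \<in> gt_subtree_leaves r v \<and> snd (f v) \<in> gt_subtree_leaves r v \<and>
        fst (f v) \<notin> S \<and> snd (f v) \<notin> S) \<and>
     (\<forall>v \<in> S \<inter> gt_Vcopy r 1. \<forall>v' \<in> S \<inter> gt_Vcopy r 1. v \<noteq> v' \<longrightarrow>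
        {fst (f v), snd (f v)} \<inter> {fst (f v'), snd (f v')} = {})"
proof -
  define A where "A = S \<inter> gt_Vcopy r 1"
  note mv = assms(2)
  have SV: "S \<subseteq> gt_V r" using mv by (simp add: gt_mutual_visibility_def)
  have Ael: "fst v = 1 \<and> length (snd v) < r \<and> v \<in> S" if "v \<in> A" for v
    using that by (cases v) (auto simp: A_def gt_Vcopy_def)
  have Aeq: "v = v'" if "v \<in> A" "v' \<in> A" "snd v = snd v'" for v v'
    using Ael[OF that(1)] Ael[OF that(2)] that(3) by (simp add: prod_eq_iff)
  have AV: "v \<in> gt_V r" if "v \<in> A" for v using Ael[OF that] SV by blast
  have fin: "finite A" using assms(3) unfolding A_def
    by (metis card.infinite not_numeral_le_zero)
  have other: "\<exists>u\<in>A. u \<noteq> v" if "v \<in> A" for v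
  proof (rule ccontr)
    assume "\<not> ?thesis"
    then have "A \<subseteq> {v}" by auto
    then have "card A \<le> card {v}" by (intro card_mono) auto
    then show False using assms(3) A_def by simp
  qed
  define u0 where "u0 v = (SOME u. u \<in> A \<and> u \<noteq> v)" for v :: gvert
  have u0: "u0 v \<in> A \<and> u0 v \<noteq> v" if "v \<in> A" for v
  proof -
    have "\<exists>u. u \<in> A \<and> u \<noteq> v" using other[OF that] by blast
    then show ?thesis unfolding u0_def by (rule someI_ex)
  qed
  define top where "top v \<longleftrightarrow> (\<forall>u\<in>A. prefix (snd v) (snd u))" for v :: gvert
  define base where "base v = (if top v then snd v @ [\<not> (snd (u0 v) ! length (snd v))] else snd v)" for v :: gvert
  define lf where "lf v b = (0::nat, base v @ replicate (r - length (base v) - 1) False @ [b])" for v :: gvert and b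
  define f where "f v = (lf v False, lf v True)" for v :: gvert
  have keyA: False if "a \<in> S" "fst a \<noteq> 2" "prefix (w@[d]) (snd a)"
    "u \<in> A" "\<not> prefix (w@[d]) (snd u)" "v \<in> A" "snd v = w" "a \<noteq> v" "snd u \<noteq> w" for a w d u v
  proof -
    have aV: "a \<in> gt_V r" using that(1) SV by blast
    have ue: "(1, snd u) = u" using Ael[OF that(4)] by (simp add: prod_eq_iff)
    have uS: "(1, snd u) \<in> S" using ue Ael[OF that(4)] by simp
    have ul: "length (snd u) < r" using Ael[OF that(4)] by simp
    have ve: "(1, w) = v" using Ael[OF that(6)] that(7) by (simp add: prod_eq_iff)
    have vS: "(1,w) \<in> S" using ve Ael[OF that(6)] by simp
    have av: "a \<noteq> (1,w)" using ve that(8) by simp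
    show False by (rule key[OF mv that(1) aV that(2,3) uS ul that(5) vS av that(9)])
  qed
  have Aneq: "snd v \<noteq> snd v'" if "v \<in> A" "v' \<in> A" "v \<noteq> v'" for v v'
  proof
    assume "snd v = snd v'"
    then have "v = v'" by (rule Aeq[OF that(1,2)])
    then show False using that(3) by simp
  qed
  have u0A: "u0 v \<in> A" if "v \<in> A" for v using u0[OF that] by simp
  have u0ne: "snd (u0 v) \<noteq> snd v" if "v \<in> A" for v
    using Aneq[OF u0A[OF that] that] u0[OF that] by simp
  have topD: "prefix (snd v) (snd u)" if "top v" "u \<in> A" for v u
    using that unfolding top_def by simp
  have ntopD: "\<exists>u\<in>A. \<not> prefix (snd v) (snd u)" if "\<not> top v" for v
    using that unfolding top_def by simp
  have base_top: "base v = snd v @ [\<not> (snd (u0 v) ! length (snd v))]" if "top v" for v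
    using that unfolding base_def by simp
  have base_ntop: "base v = snd v" if "\<not> top v" for v
    using that unfolding base_def by simp
  have top_facts: "length (snd v) < length (snd (u0 v)) \<and>
      prefix (snd v @ [snd (u0 v) ! length (snd v)]) (snd (u0 v))" if "v \<in> A" "top v" for v
  proof -
    have pr: "prefix (snd v) (snd (u0 v))" by (rule topD[OF that(2) u0A[OF that(1)]])
    have "snd v \<noteq> snd (u0 v)" using u0ne[OF that(1)] by simp
    then have l: "length (snd v) < length (snd (u0 v))" by (rule prefix_neq_len[OF pr])
    have "prefix (snd v @ [snd (u0 v) ! length (snd v)]) (snd (u0 v))"
      by (rule snoc_nth_prefix[OF pr l])
    then show ?thesis using l by simp
  qed
  have nontop_leaf: "(0,x) \<notin> S" if "v \<in> A" "\<not> top v" "prefix (snd v) x" "length x = r" for v x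
  proof
    assume xS: "(0,x) \<in> S"
    note T = that
    obtain u where u: "u \<in> A" "\<not> prefix (snd v) (snd u)" using ntopD[OF T(2)] by blast
    let ?w = "snd v"
    have lw: "length ?w < length x" using Ael[OF that(1)] that(4) by simp
    have p0: "prefix (?w @ [x ! length ?w]) x" by (rule snoc_nth_prefix[OF that(3) lw])
    have p: "prefix (?w @ [x ! length ?w]) (snd (0::nat,x))" using p0 by simp
    have np: "\<not> prefix (?w @ [x ! length ?w]) (snd u)" by (rule snoc_not_prefix[OF u(2)])
    have un: "snd u \<noteq> ?w" using u(2) by auto
    have f0: "fst (0::nat,x) \<noteq> 2" by simp
    have xv: "(0,x) \<noteq> v" using Ael[OF that(1)] by auto
    show False by (rule keyA[OF xS f0 p u(1) np that(1) refl xv un])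
  qed
  have top_leaf: "(0,x) \<notin> S" if "v \<in> A" "top v" "prefix (base v) x" "length x = r" for v x
  proof
    assume xS: "(0,x) \<in> S"
    let ?w = "snd v" and ?y = "snd (u0 v)"
    let ?d = "?y ! length ?w"
    have tf: "prefix (?w @ [?d]) ?y" using top_facts[OF that(1,2)] by simp
    have b: "base v = ?w @ [\<not> ?d]" by (rule base_top[OF that(2)])
    have np: "\<not> prefix (?w @ [\<not> ?d]) ?y"
    proof
      assume "prefix (?w @ [\<not> ?d]) ?y"
      then have "(\<not> ?d) = ?d" by (rule snoc_prefix_eq[OF _ tf])
      then show False by simp
    qed
    have p: "prefix (?w @ [\<not> ?d]) (snd (0::nat,x))" using that(3) b by simp
    have yn: "?y \<noteq> ?w" by (rule u0ne[OF that(1)])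
    have f0: "fst (0::nat,x) \<noteq> 2" by simp
    have xv: "(0,x) \<noteq> v" using Ael[OF that(1)] by auto
    show False by (rule keyA[OF xS f0 p u0A[OF that(1)] np that(1) refl xv yn])
  qed
  have base_pre: "prefix (snd v) (base v) \<and> length (base v) < r" if "v \<in> A" for v
  proof (cases "top v")
    case True
    have "length (snd (u0 v)) < r" using Ael[OF u0A[OF that]] by simp
    then show ?thesis using top_facts[OF that True] base_top[OF True] by simp
  next
    case False
    then show ?thesis using Ael[OF that] base_ntop[OF False] by simp
  qed
  have leafS: "(0,x) \<notin> S" if "v \<in> A" "prefix (base v) x" "length x = r" for v x
  proof (cases "top v")
    case True
    show ?thesis by (rule top_leaf[OF that(1) True that(2,3)])
  next
    case False
    have "prefix (snd v) x" using that(2) base_ntop[OF False] by simp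
    then show ?thesis by (rule nontop_leaf[OF that(1) False _ that(3)])
  qed
  have nontop_anti: "\<not> prefix (snd v) (snd v')" if "v \<in> A" "v' \<in> A" "\<not> top v" "v \<noteq> v'" for v v'
  proof
    assume pr: "prefix (snd v) (snd v')"
    note T = that
    obtain u where u: "u \<in> A" "\<not> prefix (snd v) (snd u)" using ntopD[OF T(3)] by blast
    let ?w = "snd v" and ?w' = "snd v'"
    have ne: "?w \<noteq> ?w'" by (rule Aneq[OF that(1,2,4)])
    have lw: "length ?w < length ?w'" by (rule prefix_neq_len[OF pr ne])
    have p: "prefix (?w @ [?w' ! length ?w]) (snd v')" by (rule snoc_nth_prefix[OF pr lw])
    have np: "\<not> prefix (?w @ [?w' ! length ?w]) (snd u)" by (rule snoc_not_prefix[OF u(2)])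
    have un: "snd u \<noteq> ?w" using u(2) by auto
    have vS: "v' \<in> S" "fst v' \<noteq> 2" using Ael[OF that(2)] by simp_all
    have vv: "v' \<noteq> v" using that(4) by simp
    show False by (rule keyA[OF vS p u(1) np that(1) refl vv un])
  qed
  have two_top: "v = v'" if "v \<in> A" "v' \<in> A" "top v" "top v'" for v v'
  proof -
    have "prefix (snd v) (snd v')" by (rule topD[OF that(3,2)])
    moreover have "prefix (snd v') (snd v)" by (rule topD[OF that(4,1)])
    ultimately have "snd v = snd v'" by (rule prefix_antisym')
    then show ?thesis by (rule Aeq[OF that(1,2)])
  qed
  have top_other: "\<not> prefix (base v) (snd v') \<and> \<not> prefix (snd v') (base v)"
    if "v \<in> A" "v' \<in> A" "top v" "v \<noteq> v'" for v v'
  proof -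
    let ?w = "snd v" and ?w' = "snd v'" and ?y = "snd (u0 v)"
    let ?d = "?y ! length ?w"
    have tf: "prefix (?w @ [?d]) ?y" using top_facts[OF that(1,3)] by simp
    have b: "base v = ?w @ [\<not> ?d]" by (rule base_top[OF that(3)])
    have np: "\<not> prefix (?w @ [\<not> ?d]) ?y"
    proof
      assume "prefix (?w @ [\<not> ?d]) ?y"
      then have "(\<not> ?d) = ?d" by (rule snoc_prefix_eq[OF _ tf])
      then show False by simp
    qed
    have pr: "prefix ?w ?w'" by (rule topD[OF that(3,2)])
    have ne: "?w \<noteq> ?w'" by (rule Aneq[OF that(1,2,4)])
    have i: "\<not> prefix (?w @ [\<not> ?d]) ?w'"
    proof
      assume h: "prefix (?w @ [\<not> ?d]) ?w'"
      have yn: "?y \<noteq> ?w" by (rule u0ne[OF that(1)])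
      have vS: "v' \<in> S" "fst v' \<noteq> 2" using Ael[OF that(2)] by simp_all
      have vv: "v' \<noteq> v" using that(4) by simp
      show False by (rule keyA[OF vS h u0A[OF that(1)] np that(1) refl vv yn])
    qed
    have ii: "\<not> prefix ?w' (?w @ [\<not> ?d])"
    proof
      assume h: "prefix ?w' (?w @ [\<not> ?d])"
      then have "?w' = ?w @ [\<not> ?d] \<or> prefix ?w' ?w" by simp
      moreover have "\<not> prefix ?w' ?w"
      proof
        assume "prefix ?w' ?w"
        then have "?w = ?w'" using pr by (simp add: prefix_antisym')
        then show False using ne by simp
      qed
      ultimately have "?w' = ?w @ [\<not> ?d]" by simp
      then show False using i by simp
    qed
    show ?thesis using i ii b by simp
  qed
  have incomp: "\<not> prefix (base v) (base v')" if "v \<in> A" "v' \<in> A" "v \<noteq> v'" for v v'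
  proof (cases "top v")
    case True
    have "\<not> top v'"
    proof
      assume "top v'"
      then have "v = v'" by (rule two_top[OF that(1,2) True])
      then show False using that(3) by simp
    qed
    then have "base v' = snd v'" by (rule base_ntop)
    then show ?thesis using top_other[OF that(1,2) True that(3)] by simp
  next
    case False
    then have bv: "base v = snd v" by (rule base_ntop)
    show ?thesis
    proof (cases "top v'")
      case True
      have "v' \<noteq> v" using that(3) by simp
      then show ?thesis using top_other[OF that(2,1) True] bv by simp
    next
      case F2: False
      then have "base v' = snd v'" by (rule base_ntop)
      then show ?thesis using nontop_anti[OF that(1,2) False that(3)] bv by simp
    qed
  qed
  have lf_len: "length (snd (lf v b)) = r" "prefix (base v) (snd (lf v b))" "fst (lf v b) = 0"
    if "v \<in> A" for v b
    using base_pre[OF that] by (auto simp: lf_def)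
  show ?thesis
  proof (intro exI[of _ f] conjI ballI impI)
    fix v assume vA: "v \<in> S \<inter> gt_Vcopy r 1"
    then have vA': "v \<in> A" using A_def by simp
    let ?s = "base v @ replicate (r - length (base v) - 1) False"
    have sl: "length ?s + 1 = r" using base_pre[OF vA'] by simp
    have nb: "gt_nbhd r (0, ?s @ [False]) = gt_nbhd r (0, ?s @ [True])"
      using nbhd_leaf[OF sl] by simp
    show "gt_twin r (fst (f v)) (snd (f v))"
      using nb sl by (simp add: gt_twin_def f_def lf_def gt_L_def)
    show "fst (f v) \<in> gt_subtree_leaves r v" "snd (f v) \<in> gt_subtree_leaves r v"
      using base_pre[OF vA'] sl unfolding f_def gt_subtree_leaves_def lf_def
      by (auto simp: prefix_def)
    have "(0, snd (lf v b)) \<notin> S" for b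
      using leafS[OF vA' lf_len(2)[OF vA'] lf_len(1)[OF vA']] by simp
    moreover have "lf v b = (0, snd (lf v b))" for b by (simp add: lf_def)
    ultimately show "fst (f v) \<notin> S" "snd (f v) \<notin> S" unfolding f_def by (metis fst_conv snd_conv)+
  next
    fix v v' assume vA: "v \<in> S \<inter> gt_Vcopy r 1" and vA2: "v' \<in> S \<inter> gt_Vcopy r 1" and ne: "v \<noteq> v'"
    then have a: "v \<in> A" "v' \<in> A" using A_def by auto
    have c: "\<not> prefix (base v) (base v')" "\<not> prefix (base v') (base v)"
      using incomp a ne by auto
    have "lf v b \<noteq> lf v' b'" for b b'
    proof
      assume h: "lf v b = lf v' b'"
      have "prefix (base v) (snd (lf v b))" "prefix (base v') (snd (lf v' b'))"
        using lf_len a by blast+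
      then have "prefix (base v) (snd (lf v b))" "prefix (base v') (snd (lf v b))" using h by simp_all
      then show False using c prefix_same_cases by blast
    qed
    then show "{fst (f v), snd (f v)} \<inter> {fst (f v'), snd (f v')} = {}"
      by (auto simp: f_def)
  qed
qed

end
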